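(* Let $\alpha,\beta>0$. The Tversky dissimilarity $d^T_{\alpha,\beta}$ is a metric on the collection of all finite subsets of $\mathbb N$ if and only if $\alpha=\beta\ge 1$.
   Context: For finite sets $X,Y$ and parameters $\alpha,\beta>0$, the Tversky index is $S(X,Y)=\dfrac{|X\cap Y|}{|X\cap Y|+\alpha|X\setminus Y|+\beta|Y\setminus X|}$, and the Tversky dissimilarity is $d^T_{\alpha,\beta}(X,Y)=1-S(X,Y)$ if $X\cup Y\ne\emptyset$ and $d^T_{\alpha,\beta}(\emptyset,\emptyset)=0$. A metric satisfies nonnegativity, $d(x,y)=0$ iff $x=y$, symmetry, and the triangle inequality. *)

theory Defs
  imports Main Complex_Main
begin

definition tversky_index :: "real \<Rightarrow> real \<Rightarrow> 'a set \<Rightarrow> 'a set \<Rightarrow> real" where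
  "tversky_index \<alpha> \<beta> X Y =
     real (card (X \<inter> Y)) /
     (real (card (X \<inter> Y)) + \<alpha> * real (card (X - Y)) + \<beta> * real (card (Y - X)))"

definition tversky_dist :: "real \<Rightarrow> real \<Rightarrow> 'a set \<Rightarrow> 'a set \<Rightarrow> real" where
  "tversky_dist \<alpha> \<beta> X Y =
     (if X \<union> Y = {} then 0 else 1 - tversky_index \<alpha> \<beta> X Y)"

definition is_metric_on :: "'a set \<Rightarrow> ('a \<Rightarrow> 'a \<Rightarrow> real) \<Rightarrow> bool" where
  "is_metric_on S d \<longleftrightarrow>
     (\<forall>x\<in>S. \<forall>y\<in>S. 0 \<le> d x y) \<and>
     (\<forall>x\<in>S. \<forall>y\<in>S. d x y = 0 \<longleftrightarrow> x = y) \<and>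
     (\<forall>x\<in>S. \<forall>y\<in>S. d x y = d y x) \<and>
     (\<forall>x\<in>S. \<forall>y\<in>S. \<forall>z\<in>S. d x z \<le> d x y + d y z)"

end

theory Submission
  imports Defs
begin

definition sdc :: "'a set \<Rightarrow> 'a set \<Rightarrow> nat" where
  "sdc X Y = card (X - Y) + card (Y - X)"

lemma card_split: "finite X \<Longrightarrow> card X = card (X \<inter> Y) + card (X - Y)"
  using card_Int_Diff[of X Y] by simp

lemma sdc_zero: "finite X \<Longrightarrow> finite Y \<Longrightarrow> sdc X Y = 0 \<longleftrightarrow> X = Y"
  unfolding sdc_def by auto

lemma sdc_tri: assumes "finite X" "finite Y" "finite Z"
  shows "sdc X Z \<le> sdc X Y + sdc Y Z"
proof -
  have "card (X - Z) \<le> card ((X - Y) \<union> (Y - Z))"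
    by (rule card_mono) (use assms in auto)
  also have "\<dots> \<le> card (X - Y) + card (Y - Z)" by (rule card_Un_le)
  finally have 1: "card (X - Z) \<le> card (X - Y) + card (Y - Z)" .
  have "card (Z - X) \<le> card ((Z - Y) \<union> (Y - X))"
    by (rule card_mono) (use assms in auto)
  also have "\<dots> \<le> card (Z - Y) + card (Y - X)" by (rule card_Un_le)
  finally have 2: "card (Z - X) \<le> card (Z - Y) + card (Y - X)" .
  show ?thesis using 1 2 unfolding sdc_def by simp
qed

lemma card_le_sdc: assumes "finite Y" "finite Z"
  shows "card Y \<le> card Z + sdc Y Z"
proof -
  have "card Y \<le> card (Z \<union> (Y - Z))" by (rule card_mono) (use assms in auto)
  also have "\<dots> \<le> card Z + card (Y - Z)" by (rule card_Un_le)
  finally show ?thesis unfolding sdc_def by simp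
qed

lemma sdc_sym: "sdc X Y = sdc Y X" unfolding sdc_def by simp

lemma dist_formula:
  assumes "finite X" "finite Y" "X \<union> Y \<noteq> {}" "\<alpha> > 0"
  shows "tversky_dist \<alpha> \<alpha> X Y =
    2 * \<alpha> * real (sdc X Y) / (real (card X) + real (card Y) + (2 * \<alpha> - 1) * real (sdc X Y))"
    and "real (card X) + real (card Y) + (2 * \<alpha> - 1) * real (sdc X Y) > 0"
proof -
  define m where "m = real (card (X \<inter> Y))"
  define s where "s = real (sdc X Y)"
  have cX: "card X = card (X \<inter> Y) + card (X - Y)" using card_split assms(1) .
  have cY: "card Y = card (X \<inter> Y) + card (Y - X)" using card_split[OF assms(2), of X]
    by (simp add: Int_commute)
  have sum: "real (card X) + real (card Y) = 2 * m + s"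
    unfolding m_def s_def sdc_def using cX cY by simp
  have pos: "m + \<alpha> * s > 0"
  proof (cases "X = Y")
    case True
    then have "X \<noteq> {}" using assms by auto
    then have "card X > 0" using assms by auto
    then show ?thesis using True m_def s_def assms by (simp add: sdc_def)
  next
    case False
    then have "sdc X Y > 0" using sdc_zero assms by (metis neq0_conv)
    then have "s > 0" using s_def by simp
    moreover have "m \<ge> 0" using m_def by simp
    ultimately show ?thesis using assms(4) by (simp add: add_nonneg_pos)
  qed
  have d: "tversky_dist \<alpha> \<alpha> X Y = \<alpha> * s / (m + \<alpha> * s)"
  proof -
    have "tversky_index \<alpha> \<alpha> X Y = m / (m + \<alpha> * s)"
      unfolding tversky_index_def m_def s_def sdc_def by (simp add: algebra_simps)
    moreover have "1 - m / (m + \<alpha> * s) = \<alpha> * s / (m + \<alpha> * s)"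
      using pos by (simp add: field_simps)
    ultimately show ?thesis unfolding tversky_dist_def using assms(3) by auto
  qed
  show "real (card X) + real (card Y) + (2 * \<alpha> - 1) * real (sdc X Y) > 0"
    using sum pos s_def by (simp add: algebra_simps)
  show "tversky_dist \<alpha> \<alpha> X Y =
    2 * \<alpha> * real (sdc X Y) / (real (card X) + real (card Y) + (2 * \<alpha> - 1) * real (sdc X Y))"
    unfolding d using sum pos s_def by (simp add: field_simps)
qed

lemma real_tri:
  fixes K a b c s1 s2 s3 :: real
  assumes K: "K \<ge> 1" and nn: "a \<ge> 0" "b \<ge> 0" "c \<ge> 0" "s1 \<ge> 0" "s2 \<ge> 0" "s3 \<ge> 0"
    and t: "s3 \<le> s1 + s2" and b1: "b \<le> c + s2" and b2: "b \<le> a + s1"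
    and p1: "K * s1 + a + b > 0" and p2: "K * s2 + b + c > 0" and p3: "K * s3 + a + c > 0"
  shows "s3 / (K * s3 + a + c) \<le> s1 / (K * s1 + a + b) + s2 / (K * s2 + b + c)"
proof -
  have p4: "K * (s1 + s2) + a + c > 0" using p3 t K nn
    by (smt (verit) mult_left_mono mult_nonneg_nonneg)
  have st1: "s3 / (K * s3 + a + c) \<le> (s1 + s2) / (K * (s1 + s2) + a + c)"
  proof -
    have "s3 * (K * (s1 + s2) + a + c) \<le> (s1 + s2) * (K * s3 + a + c)"
    proof -
      have "s3 * (a + c) \<le> (s1 + s2) * (a + c)" using t nn by (intro mult_right_mono) auto
      then show ?thesis by (simp add: algebra_simps)
    qed
    then show ?thesis using p3 p4 by (simp add: divide_simps)
  qed
  have st2: "s1 / (K * (s1 + s2) + a + c) \<le> s1 / (K * s1 + a + b)"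
  proof (rule divide_left_mono)
    have "K * s2 \<ge> s2" using K nn using mult_right_mono[of 1 K s2] by simp
    then show "K * s1 + a + b \<le> K * (s1 + s2) + a + c" using b1 by (simp add: algebra_simps)
  qed (use nn p1 p4 in auto)
  have st3: "s2 / (K * (s1 + s2) + a + c) \<le> s2 / (K * s2 + b + c)"
  proof (rule divide_left_mono)
    have "K * s1 \<ge> s1" using K nn using mult_right_mono[of 1 K s1] by simp
    then show "K * s2 + b + c \<le> K * (s1 + s2) + a + c" using b2 by (simp add: algebra_simps)
  qed (use nn p2 p4 in auto)
  have "(s1 + s2) / (K * (s1 + s2) + a + c) = s1 / (K * (s1 + s2) + a + c) + s2 / (K * (s1 + s2) + a + c)"
    by (simp add: add_divide_distrib)
  then show ?thesis using st1 st2 st3 by linarith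
qed


lemma dist_formula2:
  assumes "finite X" "finite Y" "X \<union> Y \<noteq> {}" "\<alpha> > 0"
  shows "tversky_dist \<alpha> \<alpha> X Y =
    2 * \<alpha> * (real (sdc X Y) / ((2 * \<alpha> - 1) * real (sdc X Y) + real (card X) + real (card Y)))"
  using dist_formula[OF assms] by (simp add: algebra_simps)

lemma dist_empty: "X \<union> Y = {} \<Longrightarrow> tversky_dist a b X Y = 0"
  unfolding tversky_dist_def by simp

lemma dist_nonneg:
  assumes "finite X" "finite Y" "\<alpha> > 0"
  shows "tversky_dist \<alpha> \<alpha> X Y \<ge> 0"
proof (cases "X \<union> Y = {}")
  case True then show ?thesis by (simp add: dist_empty)
next
  case False
  show ?thesis using dist_formula[OF assms(1,2) False assms(3)] assms(3) by simp
qed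

lemma dist_zero:
  assumes "finite X" "finite Y" "\<alpha> > 0"
  shows "tversky_dist \<alpha> \<alpha> X Y = 0 \<longleftrightarrow> X = Y"
proof (cases "X \<union> Y = {}")
  case True then show ?thesis by (simp add: dist_empty)
next
  case False
  show ?thesis using dist_formula[OF assms(1,2) False assms(3)] assms(3) sdc_zero[OF assms(1,2)]
    by simp
qed

lemma dist_sym: "tversky_dist a a X Y = tversky_dist a a Y X"
  unfolding tversky_dist_def tversky_index_def by (simp add: Int_commute Un_commute algebra_simps)

lemma dist_tri:
  assumes "finite X" "finite Y" "finite Z" "\<alpha> \<ge> 1"
  shows "tversky_dist \<alpha> \<alpha> X Z \<le> tversky_dist \<alpha> \<alpha> X Y + tversky_dist \<alpha> \<alpha> Y Z"
proof -
  have a0: "\<alpha> > 0" using assms by simp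
  consider "X \<union> Z = {}" | "X \<union> Y = {}" | "Y \<union> Z = {}"
    | "X \<union> Z \<noteq> {}" "X \<union> Y \<noteq> {}" "Y \<union> Z \<noteq> {}" by blast
  then show ?thesis
  proof cases
    case 1
    have "tversky_dist \<alpha> \<alpha> X Y \<ge> 0" "tversky_dist \<alpha> \<alpha> Y Z \<ge> 0"
      using dist_nonneg[OF _ _ a0] assms by auto
    then show ?thesis using 1 by (simp add: dist_empty)
  next
    case 2 then show ?thesis using dist_empty[of X Y] by auto
  next
    case 3 then show ?thesis using dist_empty[of Y Z] by auto
  next
    case 4
    define K where "K = 2 * \<alpha> - 1"
    have K: "K \<ge> 1" using assms K_def by simp
    have r: "real (sdc X Z) / (K * real (sdc X Z) + real (card X) + real (card Z))
      \<le> real (sdc X Y) / (K * real (sdc X Y) + real (card X) + real (card Y))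
       + real (sdc Y Z) / (K * real (sdc Y Z) + real (card Y) + real (card Z))"
    proof (rule real_tri[OF K])
      show "real (sdc X Z) \<le> real (sdc X Y) + real (sdc Y Z)"
        using sdc_tri[OF assms(1-3)] by simp
      show "real (card Y) \<le> real (card Z) + real (sdc Y Z)"
        using card_le_sdc[OF assms(2,3)] by simp
      show "real (card Y) \<le> real (card X) + real (sdc X Y)"
        using card_le_sdc[OF assms(2,1)] sdc_sym[of X Y] by simp
      show "K * real (sdc X Y) + real (card X) + real (card Y) > 0"
        using dist_formula(2)[OF assms(1,2) 4(2) a0] unfolding K_def by linarith
      show "K * real (sdc Y Z) + real (card Y) + real (card Z) > 0"
        using dist_formula(2)[OF assms(2,3) 4(3) a0] unfolding K_def by linarith
      show "K * real (sdc X Z) + real (card X) + real (card Z) > 0"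
        using dist_formula(2)[OF assms(1,3) 4(1) a0] unfolding K_def by linarith
    qed auto
    have "2 * \<alpha> * (real (sdc X Z) / (K * real (sdc X Z) + real (card X) + real (card Z)))
      \<le> 2 * \<alpha> * (real (sdc X Y) / (K * real (sdc X Y) + real (card X) + real (card Y))
       + real (sdc Y Z) / (K * real (sdc Y Z) + real (card Y) + real (card Z)))"
      using r a0 by (intro mult_left_mono) auto
    then show ?thesis
      unfolding dist_formula2[OF assms(1,2) 4(2) a0] dist_formula2[OF assms(2,3) 4(3) a0]
        dist_formula2[OF assms(1,3) 4(1) a0] K_def by (simp add: distrib_left)
  qed
qed

theorem mainTheorem2:
  fixes \<alpha> \<beta> :: real
  assumes "\<alpha> > 0" and "\<beta> > 0"
  shows "is_metric_on {X :: nat set. finite X} (tversky_dist \<alpha> \<beta>) \<longleftrightarrow> (\<alpha> = \<beta> \<and> \<beta> \<ge> 1)"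
proof
  assume m: "is_metric_on {X :: nat set. finite X} (tversky_dist \<alpha> \<beta>)"
  have d1: "tversky_dist \<alpha> \<beta> {0::nat} {0,1} = \<beta> / (1 + \<beta>)"
    unfolding tversky_dist_def tversky_index_def using assms by (simp, simp add: field_simps)
  have d2: "tversky_dist \<alpha> \<beta> {0::nat,1} {0} = \<alpha> / (1 + \<alpha>)"
    unfolding tversky_dist_def tversky_index_def using assms by (simp, simp add: field_simps)
  have d3: "tversky_dist \<alpha> \<beta> {0::nat,1} {1} = \<alpha> / (1 + \<alpha>)"
    unfolding tversky_dist_def tversky_index_def using assms by (simp, simp add: field_simps)
  have d4: "tversky_dist \<alpha> \<beta> {0::nat} {1} = 1"
    unfolding tversky_dist_def tversky_index_def using assms by simp
  have sym: "\<forall>x\<in>{X :: nat set. finite X}. \<forall>y\<in>{X :: nat set. finite X}. tversky_dist \<alpha> \<beta> x y = tversky_dist \<alpha> \<beta> y x"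
    using m unfolding is_metric_on_def by (elim conjE) assumption
  have tri: "\<forall>x\<in>{X :: nat set. finite X}. \<forall>y\<in>{X :: nat set. finite X}. \<forall>z\<in>{X :: nat set. finite X}.
      tversky_dist \<alpha> \<beta> x z \<le> tversky_dist \<alpha> \<beta> x y + tversky_dist \<alpha> \<beta> y z"
    using m unfolding is_metric_on_def by (elim conjE) assumption
  have "tversky_dist \<alpha> \<beta> {0::nat} {0,1} = tversky_dist \<alpha> \<beta> {0::nat,1} {0}"
    by (rule bspec[OF bspec[OF sym]]) auto
  then have "\<beta> / (1 + \<beta>) = \<alpha> / (1 + \<alpha>)" using d1 d2 by simp
  then have "\<beta> * (1 + \<alpha>) = \<alpha> * (1 + \<beta>)" using assms by (simp add: frac_eq_eq)
  then have eq: "\<alpha> = \<beta>" by (simp add: algebra_simps)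
  have "tversky_dist \<alpha> \<beta> {0::nat} {1} \<le> tversky_dist \<alpha> \<beta> {0::nat} {0,1} + tversky_dist \<alpha> \<beta> {0::nat,1} {1}"
    by (rule bspec[OF bspec[OF bspec[OF tri]]]) auto
  then have "1 \<le> \<beta> / (1 + \<beta>) + \<beta> / (1 + \<beta>)" using d1 d3 d4 eq by simp
  then have "1 \<le> (2 * \<beta>) / (1 + \<beta>)" by simp
  then have "1 + \<beta> \<le> 2 * \<beta>" using assms by (simp add: le_divide_eq)
  then show "\<alpha> = \<beta> \<and> \<beta> \<ge> 1" using eq by simp
next
  assume h: "\<alpha> = \<beta> \<and> \<beta> \<ge> 1"
  then have e: "\<beta> = \<alpha>" and a1: "\<alpha> \<ge> 1" by auto
  show "is_metric_on {X :: nat set. finite X} (tversky_dist \<alpha> \<beta>)"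
    unfolding is_metric_on_def e
  proof (intro conjI ballI)
    fix x y z :: "nat set" assume "x \<in> {X. finite X}" "y \<in> {X. finite X}" "z \<in> {X. finite X}"
    then have f: "finite x" "finite y" "finite z" by auto
    show "0 \<le> tversky_dist \<alpha> \<alpha> x y" using dist_nonneg[OF f(1,2) assms(1)] .
    show "tversky_dist \<alpha> \<alpha> x y = tversky_dist \<alpha> \<alpha> y x" by (rule dist_sym)
    show "tversky_dist \<alpha> \<alpha> x z \<le> tversky_dist \<alpha> \<alpha> x y + tversky_dist \<alpha> \<alpha> y z"
      using dist_tri[OF f a1] .
  next
    fix x y :: "nat set" assume "x \<in> {X. finite X}" "y \<in> {X. finite X}"
    then have f: "finite x" "finite y" by auto
    show "(tversky_dist \<alpha> \<alpha> x y = 0) = (x = y)" using dist_zero[OF f assms(1)] .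
  qed
qed

end
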